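(* Let $\mu$ be a nontrivial probability measure on $\partial\mathbb{D}$, $d\mu_t(\theta)=e^{2t\cos\theta}d\mu(\theta)/\int e^{2t\cos\theta}d\mu(\theta)$, and $\alpha_n(t)=\alpha_n(\mu_t)$. Let $\Theta=\Theta(\mu)$ and suppose $S=\{\theta\in(-\pi,\pi]:|\theta|<\Theta,\ e^{i\theta}\in\mathrm{supp}\,\mu\}$ is infinite. Number the points of $S$ as $\theta_0,\theta_1,\theta_2,\dots$ with $|\theta_0|\le|\theta_1|\le|\theta_2|\le\cdots$. Then, as $t\to\infty$: (i) if $|\theta_{j-1}|<|\theta_j|<|\theta_{j+1}|$ (for $j=0$: if $|\theta_0|<|\theta_1|$), then $\alpha_j(t)\to(-1)\prod_{k=0}^j(-e^{-i\theta_k})$; (ii) if $|\theta_j|=|\theta_{j+1}|$, then \[ \alpha_j(t)\to\Bigl[\prod_{k=0}^{j-1}(-e^{-i\theta_k})\Bigr]\bigl[a e^{-i\theta_j}+(1-a)e^{i\theta_j}\bigr],\qquad a=\frac{\beta_+}{\beta_++\beta_-}, \] where $\beta_\pm=\prod_{k=0}^{j-1}|e^{\pm i\theta_j}-e^{i\theta_k}|^2\,\mu(\{e^{\pm i\theta_j}\})$.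
   Context: A measure is nontrivial if its support is infinite. For a probability measure $\nu$ on $\partial\mathbb{D}$ with monic orthogonal polynomials $\Phi_n(z;\nu)$, the Verblunsky coefficients are $\alpha_n(\nu)=-\overline{\Phi_{n+1}(0;\nu)}$. $\sigma_{\mathrm{ess}}(\mu)$ is the set of non-isolated points of $\mathrm{supp}\,\mu$, and $\Theta(\mu)=\min\{|\theta|:\theta\in(-\pi,\pi],\ e^{i\theta}\in\sigma_{\mathrm{ess}}(\mu)\}$. The functions $\alpha_n(t)$ solve the Schur flow $\alpha_n'=(1-|\alpha_n|^2)(\alpha_{n+1}-\alpha_{n-1})$ with $\alpha_{-1}\equiv-1$. Empty products equal $1$. *)

theory Defs
  imports "HOL-Probability.Probability" "HOL-Computational_Algebra.Polynomial"
begin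

definition supp_meas :: "complex measure \<Rightarrow> complex set" where
  "supp_meas \<mu> = {z. \<forall>e>0. emeasure \<mu> (ball z e) > 0}"

definition ess_supp :: "complex measure \<Rightarrow> complex set" where
  "ess_supp \<mu> = {z \<in> supp_meas \<mu>. z islimpt supp_meas \<mu>}"

definition Theta :: "complex measure \<Rightarrow> real" where
  "Theta \<mu> = Inf {\<bar>\<theta>\<bar> | \<theta>. -pi < \<theta> \<and> \<theta> \<le> pi \<and> cis \<theta> \<in> ess_supp \<mu>}"

definition OPUC :: "complex measure \<Rightarrow> nat \<Rightarrow> complex poly" where
  "OPUC \<mu> n = (THE p. degree p = n \<and> lead_coeff p = 1 \<and>
      (\<forall>k<n. (\<integral>z. poly p z * cnj (z ^ k) \<partial>\<mu>) = 0))"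

definition verblunsky :: "complex measure \<Rightarrow> nat \<Rightarrow> complex" where
  "verblunsky \<mu> n = - cnj (poly (OPUC \<mu> (Suc n)) 0)"

text \<open>d mu_t = e^{2t cos theta} d mu / normalisation (cos theta = Re z on the circle).\<close>
definition exp_tilt :: "complex measure \<Rightarrow> real \<Rightarrow> complex measure" where
  "exp_tilt \<mu> t = density \<mu> (\<lambda>z. ennreal (exp (2 * t * Re z) / (\<integral>x. exp (2 * t * Re x) \<partial>\<mu>)))"

end

theory Submission
  imports Defs
begin

lemma lagrange_interp:
  fixes x :: "nat \<Rightarrow> complex" and e :: "complex poly"
  assumes inj: "inj_on x {..<m}" and deg: "degree e < m"
  shows "poly e y = (\<Sum>k<m. poly e (x k) * (\<Prod>i\<in>{..<m}-{k}. (y - x i) / (x k - x i)))"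
proof -
  define L where "L = (\<Sum>k<m. smult (poly e (x k) / (\<Prod>i\<in>{..<m}-{k}. (x k - x i)))
                               (\<Prod>i\<in>{..<m}-{k}. [:- x i, 1:]))"
  have polyL: "poly L z = (\<Sum>k<m. poly e (x k) * (\<Prod>i\<in>{..<m}-{k}. (z - x i) / (x k - x i)))" for z
    unfolding L_def poly_sum poly_smult poly_prod
    by (intro sum.cong refl) (simp add: prod_dividef)
  have "degree L \<le> m - 1"
    unfolding L_def
  proof (intro degree_sum_le)
    fix k assume "k \<in> {..<m}"
    have "degree (\<Prod>i\<in>{..<m}-{k}. [:- x i, 1:]) \<le> sum (degree \<circ> (\<lambda>i. [:- x i, 1:])) ({..<m}-{k})"
      by (rule degree_prod_sum_le) simp
    also have "\<dots> = m - 1" using \<open>k \<in> {..<m}\<close> by (simp add: o_def)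
    finally show "degree (smult (poly e (x k) / (\<Prod>i\<in>{..<m}-{k}. (x k - x i)))
                               (\<Prod>i\<in>{..<m}-{k}. [:- x i, 1:])) \<le> m - 1"
      by (rule order_trans[OF degree_smult_le])
  qed auto
  have nodes: "poly L (x j) = poly e (x j)" if j: "j < m" for j
  proof -
    have "poly L (x j) = (\<Sum>k<m. poly e (x k) * (\<Prod>i\<in>{..<m}-{k}. (x j - x i) / (x k - x i)))"
      by (rule polyL)
    also have "\<dots> = poly e (x j) * (\<Prod>i\<in>{..<m}-{j}. (x j - x i) / (x j - x i))
        + (\<Sum>k\<in>{..<m}-{j}. poly e (x k) * (\<Prod>i\<in>{..<m}-{k}. (x j - x i) / (x k - x i)))"
      by (rule sum.remove) (use j in auto)
    also have "(\<Sum>k\<in>{..<m}-{j}. poly e (x k) * (\<Prod>i\<in>{..<m}-{k}. (x j - x i) / (x k - x i))) = 0"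
    proof (intro sum.neutral ballI)
      fix k assume "k \<in> {..<m}-{j}"
      then have "(\<Prod>i\<in>{..<m}-{k}. (x j - x i) / (x k - x i)) = 0"
        using j by (intro prod_zero) auto
      then show "poly e (x k) * (\<Prod>i\<in>{..<m}-{k}. (x j - x i) / (x k - x i)) = 0" by simp
    qed
    also have "(\<Prod>i\<in>{..<m}-{j}. (x j - x i) / (x j - x i)) = 1"
    proof (intro prod.neutral ballI)
      fix i assume "i \<in> {..<m}-{j}"
      then have "x j \<noteq> x i" using inj j by (auto dest: inj_onD)
      then show "(x j - x i) / (x j - x i) = 1" by simp
    qed
    finally show ?thesis by simp
  qed
  have "e = L"
  proof (rule poly_eqI_degree[of "x ` {..<m}"])
    show "card (x ` {..<m}) > degree e" using card_image[OF inj] deg by simp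
    show "card (x ` {..<m}) > degree L" using card_image[OF inj] deg \<open>degree L \<le> m - 1\<close> by simp
  qed (auto simp: nodes)
  then have "poly e y = poly L y" by simp
  also note polyL
  finally show ?thesis .
qed


lemma poly_norm_bound_circle:
  fixes p :: "complex poly"
  assumes "cmod z = 1"
  shows "cmod (poly p z) \<le> (\<Sum>i\<le>degree p. cmod (coeff p i))"
proof -
  have "cmod (poly p z) = cmod (\<Sum>i\<le>degree p. coeff p i * z ^ i)" by (simp add: poly_altdef)
  also have "\<dots> \<le> (\<Sum>i\<le>degree p. cmod (coeff p i * z ^ i))" by (rule norm_sum)
  also have "\<dots> = (\<Sum>i\<le>degree p. cmod (coeff p i))" using assms by (simp add: norm_mult norm_power)
  finally show ?thesis .
qed

lemma AE_atom:
  assumes "AE x in M. P x" "measure M {z} > 0"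
  shows "P z"
proof (rule ccontr)
  assume nP: "\<not> P z"
  from assms(1) obtain N where N: "{x \<in> space M. \<not> P x} \<subseteq> N" "emeasure M N = 0" "N \<in> sets M"
    by (rule AE_E)
  have "emeasure M {z} \<noteq> 0" using assms(2) by (auto simp: measure_def)
  then have "{z} \<in> sets M" using emeasure_notin_sets by blast
  then have "z \<in> space M" using sets.sets_into_space by blast
  then have "{z} \<subseteq> N" using N nP by auto
  then have "emeasure M {z} \<le> emeasure M N" using N by (intro emeasure_mono) auto
  then show False using N \<open>emeasure M {z} \<noteq> 0\<close> by simp
qed

locale opuc_meas = finite_measure M for M :: "complex measure" +
  assumes sets_M: "sets M = sets borel"
    and AE_circle: "AE z in M. cmod z = 1"
    and inf_atoms: "infinite {z. measure M {z} > 0}"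
begin

definition ip :: "complex poly \<Rightarrow> complex poly \<Rightarrow> complex" where
  "ip p q = (\<integral>z. poly p z * cnj (poly q z) \<partial>M)"

lemma meas_cont: "continuous_on UNIV f \<Longrightarrow> f \<in> borel_measurable M"
  using measurable_cong_sets[OF sets_M refl] borel_measurable_continuous_onI by blast

lemma meas_poly[measurable]: "(\<lambda>z. poly p z) \<in> borel_measurable M"
  by (rule meas_cont) (intro continuous_intros)

lemma int_poly2: "integrable M (\<lambda>z. poly p z * cnj (poly q z))"
proof (rule integrable_const_bound)
  show "AE z in M. norm (poly p z * cnj (poly q z))
          \<le> (\<Sum>i\<le>degree p. cmod (coeff p i)) * (\<Sum>i\<le>degree q. cmod (coeff q i))"
    using AE_circle
  proof eventually_elim
    case (elim z)
    show ?case unfolding norm_mult complex_mod_cnj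
      by (intro mult_mono poly_norm_bound_circle elim) (auto intro: sum_nonneg)
  qed
  show "(\<lambda>z. poly p z * cnj (poly q z)) \<in> borel_measurable M"
    by (rule meas_cont) (intro continuous_intros)
qed

lemma int_norm2: "integrable M (\<lambda>z. (cmod (poly p z))\<^sup>2)"
proof (rule integrable_const_bound)
  show "AE z in M. norm ((cmod (poly p z))\<^sup>2) \<le> (\<Sum>i\<le>degree p. cmod (coeff p i))\<^sup>2"
    using AE_circle
  proof eventually_elim
    case (elim z)
    show ?case using poly_norm_bound_circle[OF elim, of p]
      by (simp add: power_mono)
  qed
  show "(\<lambda>z. (cmod (poly p z))\<^sup>2) \<in> borel_measurable M"
    by (rule meas_cont) (intro continuous_intros)
qed

definition nrm :: "complex poly \<Rightarrow> real" where
  "nrm p = (\<integral>z. (cmod (poly p z))\<^sup>2 \<partial>M)"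

lemma nrm_nonneg: "nrm p \<ge> 0"
  unfolding nrm_def by (rule integral_nonneg_AE) auto

lemma ip_self: "ip p p = of_real (nrm p)"
proof -
  have "ip p p = (\<integral>z. complex_of_real ((cmod (poly p z))\<^sup>2) \<partial>M)"
    unfolding ip_def by (intro Bochner_Integration.integral_cong refl) (rule complex_norm_square[symmetric])
  also have "\<dots> = of_real (nrm p)" unfolding nrm_def by (rule integral_complex_of_real)
  finally show ?thesis .
qed

lemma ip_add_left: "ip (p + q) r = ip p r + ip q r"
  unfolding ip_def by (simp add: distrib_right int_poly2)

lemma ip_diff_left: "ip (p - q) r = ip p r - ip q r"
  unfolding ip_def by (simp add: left_diff_distrib int_poly2)

lemma ip_smult_left: "ip (smult a p) r = a * ip p r"
  unfolding ip_def by (simp add: mult.assoc)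

lemma ip_conj: "ip q p = cnj (ip p q)"
  unfolding ip_def by (subst Bochner_Integration.integral_cnj[symmetric]) (simp add: mult.commute)

lemma ip_add_right: "ip r (p + q) = ip r p + ip r q"
  by (metis ip_conj ip_add_left complex_cnj_add)

lemma ip_diff_right: "ip r (p - q) = ip r p - ip r q"
  by (metis ip_conj ip_diff_left complex_cnj_diff)

lemma ip_smult_right: "ip r (smult a p) = cnj a * ip r p"
  by (metis ip_conj ip_smult_left complex_cnj_mult)

lemma ip_zero_right[simp]: "ip p 0 = 0"
  unfolding ip_def by simp

lemma nrm_zero_imp: assumes "nrm p = 0" shows "p = 0"
proof (rule ccontr)
  assume "p \<noteq> 0"
  have "AE z in M. (cmod (poly p z))\<^sup>2 = 0"
    using assms unfolding nrm_def by (subst (asm) integral_nonneg_eq_0_iff_AE) (auto intro: int_norm2)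
  then have "{z. measure M {z} > 0} \<subseteq> {z. poly p z = 0}"
    by (auto dest: AE_atom)
  then have "finite {z. measure M {z} > 0}"
    using poly_roots_finite[OF \<open>p \<noteq> 0\<close>] finite_subset by blast
  then show False using inf_atoms by simp
qed

definition orth :: "nat \<Rightarrow> complex poly \<Rightarrow> bool" where
  "orth n p \<longleftrightarrow> (\<forall>q. degree q < n \<longrightarrow> ip p q = 0)"

lemma small_poly:
  fixes q :: "complex poly"
  assumes "\<forall>i\<ge>n. coeff q i = 0"
  shows "q = 0 \<or> degree q < n"
proof (cases "q = 0")
  case False
  then have "coeff q (degree q) \<noteq> 0" by simp
  then have "\<not> degree q \<ge> n" using assms by blast
  then show ?thesis by simp
qed simp

lemma orth_small: "orth n p \<Longrightarrow> q = 0 \<or> degree q < n \<Longrightarrow> ip p q = 0"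
  unfolding orth_def by auto

lemma proj_exists: "\<forall>f. \<exists>g. (g = 0 \<or> degree g < n) \<and> orth n (f - g)"
proof (induction n)
  case 0
  show ?case by (auto simp: orth_def)
next
  case (Suc n)
  obtain h where h: "h = 0 \<or> degree h < n" "orth n (monom 1 n - h)"
    using Suc.IH by blast
  define \<Phi> where "\<Phi> = monom 1 n - h"
  have coeffPhi: "coeff \<Phi> n = 1" "\<forall>i>n. coeff \<Phi> i = 0"
    using h(1) by (auto simp: \<Phi>_def coeff_monom coeff_eq_0)
  then have "\<Phi> \<noteq> 0" by auto
  have "ip \<Phi> \<Phi> \<noteq> 0"
  proof
    assume "ip \<Phi> \<Phi> = 0"
    then have "nrm \<Phi> = 0" by (simp add: ip_self)
    then show False using nrm_zero_imp \<open>\<Phi> \<noteq> 0\<close> by blast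
  qed
  have degPhi: "degree \<Phi> \<le> n" using coeffPhi by (intro degree_le) auto
  show ?case
  proof
    fix f
    obtain g0 where g0: "g0 = 0 \<or> degree g0 < n" "orth n (f - g0)"
      using Suc.IH by blast
    define c where "c = ip (f - g0) \<Phi> / ip \<Phi> \<Phi>"
    define g where "g = g0 + smult c \<Phi>"
    have "degree g < Suc n"
    proof -
      have "degree g \<le> max (degree g0) (degree (smult c \<Phi>))"
        unfolding g_def by (rule degree_add_le_max)
      also have "\<dots> \<le> n" using g0(1) degPhi degree_smult_le[of c \<Phi>] by auto
      finally show ?thesis by simp
    qed
    moreover have "orth (Suc n) (f - g)"
      unfolding orth_def
    proof (intro allI impI)
      fix q :: "complex poly" assume "degree q < Suc n"
      define a where "a = coeff q n"
      define q' where "q' = q - smult a \<Phi>"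
      have "\<forall>i\<ge>n. coeff q' i = 0"
      proof (intro allI impI)
        fix i assume "i \<ge> n"
        show "coeff q' i = 0"
        proof (cases "i = n")
          case True then show ?thesis using coeffPhi by (simp add: q'_def a_def)
        next
          case False
          then have "i > n" using \<open>i \<ge> n\<close> by simp
          then show ?thesis using coeffPhi \<open>degree q < Suc n\<close>
            by (simp add: q'_def coeff_eq_0)
        qed
      qed
      then have q'small: "q' = 0 \<or> degree q' < n" by (rule small_poly)
      have q_eq: "q = q' + smult a \<Phi>" by (simp add: q'_def)
      have "ip (f - g) q = ip ((f - g0) - smult c \<Phi>) q"
        by (simp add: g_def algebra_simps)
      also have "\<dots> = ip (f - g0) q - c * ip \<Phi> q"
        by (simp add: ip_diff_left ip_smult_left)
      also have "ip (f - g0) q = cnj a * ip (f - g0) \<Phi>"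
        unfolding q_eq ip_add_right ip_smult_right
        using orth_small[OF g0(2) q'small] by simp
      also have "ip \<Phi> q = cnj a * ip \<Phi> \<Phi>"
        unfolding q_eq ip_add_right ip_smult_right
        using orth_small[OF h(2) q'small] by (simp add: \<Phi>_def)
      finally show "ip (f - g) q = 0"
        using \<open>ip \<Phi> \<Phi> \<noteq> 0\<close> by (simp add: c_def)
    qed
    ultimately show "\<exists>g. (g = 0 \<or> degree g < Suc n) \<and> orth (Suc n) (f - g)" by blast
  qed
qed

lemma orth_monomials:
  assumes "\<forall>k<n. (\<integral>z. poly p z * cnj (z ^ k) \<partial>M) = 0"
  shows "orth n p"
  unfolding orth_def
proof (intro allI impI)
  fix q :: "complex poly" assume dq: "degree q < n"
  have "ip p q = (\<integral>z. (\<Sum>i\<le>degree q. cnj (coeff q i) * (poly p z * cnj (z ^ i))) \<partial>M)"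
    unfolding ip_def poly_altdef[of q]
    by (intro Bochner_Integration.integral_cong refl) (simp add: sum_distrib_left mult_ac)
  also have "\<dots> = (\<Sum>i\<le>degree q. cnj (coeff q i) * (\<integral>z. poly p z * cnj (z ^ i) \<partial>M))"
  proof -
    have "(\<integral>z. (\<Sum>i\<le>degree q. cnj (coeff q i) * (poly p z * cnj (z ^ i))) \<partial>M)
       = (\<Sum>i\<le>degree q. (\<integral>z. cnj (coeff q i) * (poly p z * cnj (z ^ i)) \<partial>M))"
    proof (rule Bochner_Integration.integral_sum)
      show "integrable M (\<lambda>z. cnj (coeff q i) * (poly p z * cnj (z ^ i)))" for i
        using int_poly2[of p "monom 1 i"] by (simp add: poly_monom)
    qed
    then show ?thesis by simp
  qed
  also have "\<dots> = 0" using assms dq by (intro sum.neutral) auto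
  finally show "ip p q = 0" .
qed

lemma OPUC_props:
  shows "degree (OPUC M n) = n" "lead_coeff (OPUC M n) = 1" "orth n (OPUC M n)"
proof -
  let ?P = "\<lambda>p. degree p = n \<and> lead_coeff p = 1 \<and>
      (\<forall>k<n. (\<integral>z. poly p z * cnj (z ^ k) \<partial>M) = 0)"
  obtain g where g: "g = 0 \<or> degree g < n" "orth n (monom 1 n - g)"
    using proj_exists by blast
  define \<Phi> where "\<Phi> = monom 1 n - g"
  have coeffPhi: "coeff \<Phi> n = 1" "\<forall>i>n. coeff \<Phi> i = 0"
    using g(1) by (auto simp: \<Phi>_def coeff_monom coeff_eq_0)
  have degPhi: "degree \<Phi> = n"
    using coeffPhi by (metis degree_le le_antisym le_degree zero_neq_one)
  have "?P \<Phi>"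
  proof (intro conjI allI impI)
    show "degree \<Phi> = n" by (rule degPhi)
    show "lead_coeff \<Phi> = 1" using degPhi coeffPhi by simp
    fix k assume "k < n"
    have "ip \<Phi> (monom 1 k) = 0"
      using g(2) \<open>k < n\<close> unfolding orth_def \<Phi>_def by (simp add: degree_monom_eq)
    then show "(\<integral>z. poly \<Phi> z * cnj (z ^ k) \<partial>M) = 0" by (simp add: ip_def poly_monom)
  qed
  moreover have uniq: "p = \<Phi>" if "?P p" for p
  proof -
    have op: "orth n p" using that orth_monomials by blast
    have oP: "orth n \<Phi>" using g(2) by (simp add: \<Phi>_def)
    define r where "r = p - \<Phi>"
    have "\<forall>i\<ge>n. coeff r i = 0"
    proof (intro allI impI)
      fix i assume "i \<ge> n"
      show "coeff r i = 0"
      proof (cases "i = n")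
        case True
        have "coeff p n = 1" using that by (elim conjE) simp
        then show ?thesis using True coeffPhi by (simp add: r_def)
      next
        case False then show ?thesis using that coeffPhi \<open>i \<ge> n\<close> by (simp add: r_def coeff_eq_0)
      qed
    qed
    then have rs: "r = 0 \<or> degree r < n" by (rule small_poly)
    have "ip r r = 0"
      unfolding r_def ip_diff_left using orth_small[OF op rs] orth_small[OF oP rs]
      by (simp add: r_def)
    then have "nrm r = 0" by (simp add: ip_self)
    then have "r = 0" by (rule nrm_zero_imp)
    then show ?thesis by (simp add: r_def)
  qed
  ultimately have O: "OPUC M n = \<Phi>"
    unfolding OPUC_def by (rule the_equality)
  show "degree (OPUC M n) = n" using degPhi O by simp
  show "lead_coeff (OPUC M n) = 1" using O degPhi coeffPhi by simp
  show "orth n (OPUC M n)" using O g(2) by (simp add: \<Phi>_def)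
qed

lemma OPUC_min:
  assumes "degree P = n" "lead_coeff P = 1"
  shows "nrm (OPUC M n) \<le> nrm P"
proof -
  let ?F = "OPUC M n"
  define r where "r = P - ?F"
  have "\<forall>i\<ge>n. coeff r i = 0"
  proof (intro allI impI)
    fix i assume "i \<ge> n"
    show "coeff r i = 0"
    proof (cases "i = n")
      case True then show ?thesis using assms OPUC_props by (simp add: r_def)
    next
      case False then show ?thesis using assms OPUC_props(1) \<open>i \<ge> n\<close> by (simp add: r_def coeff_eq_0)
    qed
  qed
  then have rs: "r = 0 \<or> degree r < n" by (rule small_poly)
  have o1: "ip ?F r = 0" using orth_small[OF OPUC_props(3) rs] .
  have o2: "ip r ?F = 0" using o1 ip_conj[of r ?F] by simp
  have "P = ?F + r" by (simp add: r_def)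
  then have "ip P P = ip ?F ?F + ip r r"
    using o1 o2 by (simp add: ip_add_left ip_add_right)
  then have "complex_of_real (nrm P) = complex_of_real (nrm (OPUC M n) + nrm r)" by (simp add: ip_self)
  then have "nrm P = nrm (OPUC M n) + nrm r" by (simp only: of_real_eq_iff)
  then show ?thesis using nrm_nonneg[of r] by linarith
qed

end

lemma space_borel_sets: "sets M = sets (borel :: complex measure) \<Longrightarrow> space M = UNIV"
  using sets_eq_imp_space_eq by fastforce

lemma sum_indicator_delta:
  assumes "finite A"
  shows "(\<Sum>z\<in>A. g z * indicator {z} x) = (if x \<in> A then g x else (0::real))"
proof -
  have "(\<Sum>z\<in>A. g z * indicator {z} x) = (\<Sum>z\<in>A. if z = x then g z else 0)"
    by (intro sum.cong refl) (auto simp: indicator_def)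
  also have "\<dots> = (if x \<in> A then g x else 0)" using assms by (simp add: sum.delta)
  finally show ?thesis .
qed

lemma integral_atoms:
  assumes "finite_measure M" "sets M = sets (borel :: complex measure)" "finite A"
  shows "integrable M (\<lambda>x. \<Sum>z\<in>A. g z * indicator {z} x)"
    "(\<integral>x. (\<Sum>z\<in>A. g z * indicator {z} x) \<partial>M) = (\<Sum>z\<in>A. g z * measure M {z})"
proof -
  interpret finite_measure M by fact
  have sing: "{z} \<in> sets M" for z using assms(2) by simp
  have int: "integrable M (\<lambda>x. g z * indicator {z} x)" for z
    using sing by (intro integrable_mult_right integrable_real_indicator) (auto simp: less_top[symmetric])
  show "integrable M (\<lambda>x. \<Sum>z\<in>A. g z * indicator {z} x)"
    using int by (intro Bochner_Integration.integrable_sum) auto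
  have "(\<integral>x. (\<Sum>z\<in>A. g z * indicator {z} x) \<partial>M) = (\<Sum>z\<in>A. (\<integral>x. g z * indicator {z} x \<partial>M))"
    by (rule Bochner_Integration.integral_sum) (rule int)
  also have "\<dots> = (\<Sum>z\<in>A. g z * measure M {z})"
    using space_borel_sets[OF assms(2)] by simp
  finally show "(\<integral>x. (\<Sum>z\<in>A. g z * indicator {z} x) \<partial>M) = (\<Sum>z\<in>A. g z * measure M {z})" .
qed

lemma atoms_le_integral:
  assumes "finite_measure M" "sets M = sets (borel :: complex measure)" "finite A"
    and "integrable M g" "\<And>x. g x \<ge> 0"
  shows "(\<Sum>z\<in>A. g z * measure M {z}) \<le> integral\<^sup>L M g"
proof -
  have "(\<Sum>z\<in>A. g z * measure M {z}) = (\<integral>x. (\<Sum>z\<in>A. g z * indicator {z} x) \<partial>M)"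
    using integral_atoms[OF assms(1-3)] by simp
  also have "\<dots> \<le> integral\<^sup>L M g"
  proof (rule integral_mono)
    show "integrable M (\<lambda>x. \<Sum>z\<in>A. g z * indicator {z} x)" using integral_atoms[OF assms(1-3)] by simp
    show "integrable M g" by fact
    fix x show "(\<Sum>z\<in>A. g z * indicator {z} x) \<le> g x"
      using assms(5)[of x] by (simp add: sum_indicator_delta[OF assms(3)])
  qed
  finally show ?thesis .
qed

lemma integral_le_atoms:
  assumes "prob_space M" "sets M = sets (borel :: complex measure)" "finite A"
    and "integrable M g" "AE x in M. x \<in> A \<or> g x \<le> B" "\<And>x. g x \<ge> 0" "B \<ge> 0"
  shows "integral\<^sup>L M g \<le> (\<Sum>z\<in>A. g z * measure M {z}) + B"
proof -
  interpret prob_space M by fact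
  have fm: "finite_measure M" by unfold_locales
  have "integral\<^sup>L M g \<le> (\<integral>x. (\<Sum>z\<in>A. g z * indicator {z} x) + B \<partial>M)"
  proof (rule integral_mono_AE)
    show "integrable M g" by fact
    show "integrable M (\<lambda>x. (\<Sum>z\<in>A. g z * indicator {z} x) + B)"
      using integral_atoms[OF fm assms(2,3)] by auto
    show "AE x in M. g x \<le> (\<Sum>z\<in>A. g z * indicator {z} x) + B"
      using assms(5)
    proof eventually_elim
      case (elim x)
      then show ?case using assms(6,7) by (auto simp: sum_indicator_delta[OF assms(3)])
    qed
  qed
  also have "\<dots> = (\<Sum>z\<in>A. g z * measure M {z}) + B"
    using integral_atoms[OF fm assms(2,3)] by (simp add: prob_space)
  finally show ?thesis .
qed

lemma null_outside_supp:
  assumes "sets \<mu> = sets (borel :: complex measure)" "A \<inter> supp_meas \<mu> = {}"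
  shows "AE x in \<mu>. x \<notin> A"
proof -
  define F where "F = {ball x e | x e. e > 0 \<and> emeasure \<mu> (ball x e) = 0}"
  have "open S" if "S \<in> F" for S using that by (auto simp: F_def)
  then obtain F' where F': "F' \<subseteq> F" "countable F'" "\<Union>F' = \<Union>F"
    using Lindelof by metis
  have AF: "A \<subseteq> \<Union>F"
  proof
    fix x assume "x \<in> A"
    then have "x \<notin> supp_meas \<mu>" using assms(2) by auto
    then obtain e where "e > 0" "\<not> emeasure \<mu> (ball x e) > 0" by (auto simp: supp_meas_def)
    then have "emeasure \<mu> (ball x e) = 0" by (simp add: not_gr_zero)
    then have "ball x e \<in> F" unfolding F_def using \<open>e > 0\<close> by blast
    moreover have "x \<in> ball x e" using \<open>e > 0\<close> by simp
    ultimately show "x \<in> \<Union>F" by blast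
  qed
  have "(\<Union>S\<in>F'. S) \<in> null_sets \<mu>"
  proof (rule null_sets_UN')
    show "countable F'" by fact
    fix S assume "S \<in> F'"
    then have "S \<in> F" using F' by blast
    then obtain x e where "S = ball x e" "emeasure \<mu> (ball x e) = 0" unfolding F_def by blast
    moreover have "ball x e \<in> sets \<mu>" unfolding assms(1) by (rule borel_open[OF open_ball])
    ultimately show "S \<in> null_sets \<mu>" by (auto intro: null_setsI)
  qed
  then show ?thesis
    by (rule AE_I') (use AF F'(3) in blast)
qed

locale setting =
  fixes \<mu> :: "complex measure" and \<theta> :: "nat \<Rightarrow> real"
  assumes prob: "prob_space \<mu>" and sets_mu: "sets \<mu> = sets borel"
    and sph: "emeasure \<mu> (sphere 0 1) = 1"
    and bij: "bij_betw \<theta> UNIV {\<phi>. -pi < \<phi> \<and> \<phi> \<le> pi \<and> \<bar>\<phi>\<bar> < Theta \<mu> \<and> cis \<phi> \<in> supp_meas \<mu>}"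
    and mono_th: "mono (\<lambda>k. \<bar>\<theta> k\<bar>)"
begin

abbreviation "S \<equiv> {\<phi>. -pi < \<phi> \<and> \<phi> \<le> pi \<and> \<bar>\<phi>\<bar> < Theta \<mu> \<and> cis \<phi> \<in> supp_meas \<mu>}"

lemma thS: "-pi < \<theta> k" "\<theta> k \<le> pi" "\<bar>\<theta> k\<bar> < Theta \<mu>" "cis (\<theta> k) \<in> supp_meas \<mu>"
  using bij_betwE[OF bij] by auto

lemma th_inj: "inj \<theta>" using bij bij_betw_def by blast

lemma th_surj: "\<phi> \<in> S \<Longrightarrow> \<exists>k. \<theta> k = \<phi>"
  using bij unfolding bij_betw_def by (metis imageE)

lemma abs_mono: "k \<le> l \<Longrightarrow> \<bar>\<theta> k\<bar> \<le> \<bar>\<theta> l\<bar>"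
  using mono_th by (auto dest: monoD)

lemma abs_lt_imp: "\<bar>\<theta> k\<bar> < \<bar>\<theta> l\<bar> \<Longrightarrow> k < l"
  using abs_mono[of l k] by (cases "k < l") auto

lemma abs_le_pi: "\<bar>\<theta> k\<bar> \<le> pi" using thS[of k] by auto

lemma cis_th_inj: "inj (\<lambda>k. cis (\<theta> k))"
proof (rule injI)
  fix k l assume "cis (\<theta> k) = cis (\<theta> l)"
  then have "Arg (cis (\<theta> k)) = Arg (cis (\<theta> l))" by simp
  then have "\<theta> k = \<theta> l" using thS[of k] thS[of l] by (simp add: Arg_cis)
  then show "k = l" using th_inj by (simp add: inj_eq)
qed

lemma step2: "\<bar>\<theta> k\<bar> < \<bar>\<theta> (Suc (Suc k))\<bar>"
proof (rule ccontr)
  assume "\<not> ?thesis"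
  then have e2: "\<bar>\<theta> (Suc (Suc k))\<bar> = \<bar>\<theta> k\<bar>" using abs_mono[of k "Suc (Suc k)"] by simp
  have e1: "\<bar>\<theta> (Suc k)\<bar> = \<bar>\<theta> k\<bar>" using abs_mono[of k "Suc k"] abs_mono[of "Suc k" "Suc (Suc k)"] e2 by simp
  have d1: "\<theta> (Suc k) \<noteq> \<theta> k" "\<theta> (Suc (Suc k)) \<noteq> \<theta> k" "\<theta> (Suc (Suc k)) \<noteq> \<theta> (Suc k)"
    using th_inj by (auto dest: injD)
  show False using e1 e2 d1 by (auto simp: abs_if split: if_splits)
qed

lemma AE_circle: "AE x in \<mu>. cmod x = 1"
proof -
  interpret prob_space \<mu> by (rule prob)
  have sp: "space \<mu> = UNIV" using space_borel_sets[OF sets_mu] .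
  have ss: "sphere 0 1 \<in> sets \<mu>" unfolding sets_mu by simp
  have "emeasure \<mu> (space \<mu> - sphere 0 1) = emeasure \<mu> (space \<mu>) - emeasure \<mu> (sphere 0 1)"
    using ss by (intro emeasure_compl) auto
  also have "\<dots> = 0" using sph emeasure_space_1 by simp
  moreover have "UNIV - sphere 0 1 \<in> sets \<mu>" using sets.compl_sets[OF ss] sp by simp
  ultimately have "UNIV - sphere 0 1 \<in> null_sets \<mu>" using sp by (auto intro: null_setsI)
  then show ?thesis by (rule AE_I') (auto simp: sp)
qed

lemma circle_arg:
  assumes "cmod x = 1"
  shows "x = cis (Arg x)" "-pi < Arg x" "Arg x \<le> pi" "Re x = cos \<bar>Arg x\<bar>"
proof -
  have "x \<noteq> 0" using assms by auto
  then have "cis (Arg x) = sgn x" by (rule cis_Arg)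
  also have "sgn x = x" using assms by (simp add: sgn_div_norm)
  finally show xe: "x = cis (Arg x)" by simp
  show "-pi < Arg x" "Arg x \<le> pi" by (rule mpi_less_Arg, rule Arg_le_pi)
  have "Re x = cos (Arg x)" by (subst xe) simp
  then show "Re x = cos \<bar>Arg x\<bar>" by (simp add: abs_if)
qed

lemma AE_top: "AE x in \<mu>. cmod x = 1 \<and> (x \<in> (\<lambda>k. cis (\<theta> k)) ` {..<N} \<or> Re x \<le> cos (\<theta> N))"
proof -
  define A where "A = {x. cmod x = 1 \<and> x \<notin> (\<lambda>k. cis (\<theta> k)) ` {..<N} \<and> Re x > cos (\<theta> N)}"
  have "A \<inter> supp_meas \<mu> = {}"
  proof (rule ccontr)
    assume "A \<inter> supp_meas \<mu> \<noteq> {}"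
    then obtain x where xA: "x \<in> A" and xs: "x \<in> supp_meas \<mu>" by blast
    have x1: "cmod x = 1" using xA by (simp add: A_def)
    note ca = circle_arg[OF x1]
    have "cos \<bar>Arg x\<bar> > cos \<bar>\<theta> N\<bar>" using xA ca(4) by (simp add: A_def)
    then have lt: "\<bar>Arg x\<bar> < \<bar>\<theta> N\<bar>"
      using cos_mono_less_eq[of "\<bar>\<theta> N\<bar>" "\<bar>Arg x\<bar>"] abs_le_pi[of N] ca(2,3) by auto
    have "Arg x \<in> S" using ca lt thS(3)[of N] xs by auto
    then obtain k where k: "\<theta> k = Arg x" using th_surj by blast
    then have "k < N" using lt abs_lt_imp by auto
    moreover have "x = cis (\<theta> k)" using k ca(1) by simp
    ultimately have "x \<in> (\<lambda>k. cis (\<theta> k)) ` {..<N}" by blast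
    then show False using xA by (simp add: A_def)
  qed
  then have "AE x in \<mu>. x \<notin> A" by (rule null_outside_supp[OF sets_mu])
  then show ?thesis using AE_circle by eventually_elim (auto simp: A_def)
qed

lemma cos_strict: "\<bar>\<theta> k\<bar> < \<bar>\<theta> l\<bar> \<Longrightarrow> cos (\<theta> l) < cos (\<theta> k)"
  using cos_mono_less_eq[of "\<bar>\<theta> l\<bar>" "\<bar>\<theta> k\<bar>"] abs_le_pi[of k] abs_le_pi[of l] by simp

lemma atom_pos: "measure \<mu> {cis (\<theta> k)} > 0"
proof -
  interpret prob_space \<mu> by (rule prob)
  define N where "N = Suc (Suc k)"
  define z where "z = cis (\<theta> k)"
  define C where "C = {x. Re x \<le> cos (\<theta> N)} \<union> ((\<lambda>k. cis (\<theta> k)) ` {..<N} - {z})"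
  have "closed C" unfolding C_def by (intro closed_Un closed_halfspace_Re_le finite_imp_closed) auto
  have "Re z > cos (\<theta> N)" unfolding z_def N_def using cos_strict[OF step2[of k]] by simp
  then have "z \<in> - C" by (auto simp: C_def)
  then obtain e where e: "e > 0" "ball z e \<subseteq> - C"
    using \<open>closed C\<close> open_contains_ball[of "- C"] by (auto simp: closed_def)
  have pos: "emeasure \<mu> (ball z e) > 0" using thS(4)[of k] e(1) by (simp add: supp_meas_def z_def)
  have "AE x in \<mu>. x \<in> ball z e \<longleftrightarrow> x \<in> {z}"
    using AE_top[of N]
  proof eventually_elim
    case (elim x)
    show ?case
    proof
      assume "x \<in> ball z e"
      then have "x \<notin> C" using e(2) by auto
      then show "x \<in> {z}" using elim by (auto simp: C_def)
    qed (use e(1) in simp)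
  qed
  then have "emeasure \<mu> (ball z e) = emeasure \<mu> {z}"
    by (rule emeasure_eq_AE) (auto simp: sets_mu)
  then have "emeasure \<mu> {z} > 0" using pos by simp
  then show ?thesis unfolding z_def using emeasure_eq_measure by (simp add: z_def)
qed

end

context setting
begin

definition Zt :: "real \<Rightarrow> real" where "Zt t = (\<integral>x. exp (2 * t * Re x) \<partial>\<mu>)"
definition gt :: "real \<Rightarrow> complex \<Rightarrow> real" where "gt t x = exp (2 * t * Re x) / Zt t"
definition W :: "real \<Rightarrow> complex poly \<Rightarrow> real" where
  "W t p = (\<integral>x. exp (2 * t * Re x) * (cmod (poly p x))\<^sup>2 \<partial>\<mu>)"
definition Bp :: "complex poly \<Rightarrow> real" where "Bp p = (\<Sum>i\<le>degree p. cmod (coeff p i))\<^sup>2"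

lemma sp_mu: "space \<mu> = UNIV" using space_borel_sets[OF sets_mu] .

lemma meas_mu: "continuous_on UNIV f \<Longrightarrow> f \<in> borel_measurable \<mu>"
  using measurable_cong_sets[OF sets_mu refl] borel_measurable_continuous_onI by blast

lemma fin_mu: "finite_measure \<mu>"
  using prob prob_space_def by blast

lemma exp_bound: "cmod x = 1 \<Longrightarrow> exp (2 * t * Re x) \<le> exp (2 * \<bar>t\<bar>)"
proof -
  assume "cmod x = 1"
  then have "\<bar>Re x\<bar> \<le> 1" using abs_Re_le_cmod[of x] by simp
  then have "\<bar>t * Re x\<bar> \<le> \<bar>t\<bar>" by (simp add: abs_mult mult_left_le)
  then have "2 * t * Re x \<le> 2 * \<bar>t\<bar>" by linarith
  then show ?thesis by simp
qed

lemma exp_lbound: "cmod x = 1 \<Longrightarrow> exp (- 2 * \<bar>t\<bar>) \<le> exp (2 * t * Re x)"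
proof -
  assume "cmod x = 1"
  then have "\<bar>Re x\<bar> \<le> 1" using abs_Re_le_cmod[of x] by simp
  then have "\<bar>t * Re x\<bar> \<le> \<bar>t\<bar>" by (simp add: abs_mult mult_left_le)
  then have "- 2 * \<bar>t\<bar> \<le> 2 * t * Re x" by linarith
  then show ?thesis by simp
qed

lemma int_exp: "integrable \<mu> (\<lambda>x. exp (2 * t * Re x))"
proof -
  interpret finite_measure \<mu> by (rule fin_mu)
  show ?thesis
  proof (rule integrable_const_bound)
    show "AE x in \<mu>. norm (exp (2 * t * Re x)) \<le> exp (2 * \<bar>t\<bar>)"
      using AE_circle
    proof eventually_elim
      case (elim x)
      show ?case using exp_bound[OF elim, of t] by simp
    qed
    show "(\<lambda>x. exp (2 * t * Re x)) \<in> borel_measurable \<mu>"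
      by (rule meas_mu) (intro continuous_intros)
  qed
qed

lemma int_W: "integrable \<mu> (\<lambda>x. exp (2 * t * Re x) * (cmod (poly p x))\<^sup>2)"
proof -
  interpret finite_measure \<mu> by (rule fin_mu)
  show ?thesis
  proof (rule integrable_const_bound)
    show "AE x in \<mu>. norm (exp (2 * t * Re x) * (cmod (poly p x))\<^sup>2) \<le> exp (2 * \<bar>t\<bar>) * Bp p"
      using AE_circle
    proof eventually_elim
      case (elim x)
      have "(cmod (poly p x))\<^sup>2 \<le> Bp p"
        unfolding Bp_def using poly_norm_bound_circle[OF elim, of p] by (simp add: power_mono)
      then show ?case using exp_bound[OF elim, of t]
        by (simp add: abs_mult) (intro mult_mono, auto)
    qed
    show "(\<lambda>x. exp (2 * t * Re x) * (cmod (poly p x))\<^sup>2) \<in> borel_measurable \<mu>"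
      by (rule meas_mu) (intro continuous_intros)
  qed
qed

lemma Z_pos: "Zt t > 0"
proof -
  interpret prob_space \<mu> by (rule prob)
  have "exp (- 2 * \<bar>t\<bar>) = (\<integral>x. exp (- 2 * \<bar>t\<bar>) \<partial>\<mu>)" by (simp add: prob_space)
  also have "\<dots> \<le> Zt t" unfolding Zt_def
    by (rule integral_mono_AE) (use int_exp AE_circle exp_lbound in \<open>auto elim: AE_mp\<close>)
  finally show ?thesis by (smt (verit) exp_gt_zero)
qed

abbreviation "nu t \<equiv> exp_tilt \<mu> t"

lemma Z_ne: "Zt t \<noteq> 0" using Z_pos[of t] by simp

lemma gt_meas[measurable]: "gt t \<in> borel_measurable \<mu>"
  unfolding gt_def by (rule meas_mu) (intro continuous_intros, simp add: Z_ne)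

lemma gt_pos: "gt t x > 0" unfolding gt_def using Z_pos by simp

lemma nu_eq: "nu t = density \<mu> (\<lambda>x. ennreal (gt t x))"
  unfolding exp_tilt_def gt_def Zt_def by simp

lemma int_gt: "integrable \<mu> (gt t)"
  unfolding gt_def using int_exp Z_pos[of t] by simp

lemma sets_nu: "sets (nu t) = sets borel"
  unfolding nu_eq by (simp add: sets_mu)

lemma meas_nu_atom: "measure (nu t) {z} = gt t z * measure \<mu> {z}"
proof -
  interpret finite_measure \<mu> by (rule fin_mu)
  have "emeasure (nu t) {z} = (\<integral>\<^sup>+ x. ennreal (gt t x) * indicator {z} x \<partial>\<mu>)"
    unfolding nu_eq by (rule emeasure_density) (auto simp: sets_mu)
  also have "\<dots> = ennreal (gt t z) * emeasure \<mu> {z}"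
    by (rule nn_integral_indicator_singleton) (simp add: sets_mu)
  also have "\<dots> = ennreal (gt t z * measure \<mu> {z})"
    using gt_pos[of t z] by (simp add: emeasure_eq_measure ennreal_mult)
  finally show ?thesis using gt_pos[of t z] by (simp add: measure_def)
qed

lemma opuc_nu: "opuc_meas (nu t)"
proof -
  interpret finite_measure \<mu> by (rule fin_mu)
  have "emeasure (nu t) (space (nu t)) = (\<integral>\<^sup>+ x. ennreal (gt t x) * indicator (space \<mu>) x \<partial>\<mu>)"
    unfolding nu_eq space_density by (rule emeasure_density) auto
  also have "\<dots> = (\<integral>\<^sup>+ x. ennreal (gt t x) \<partial>\<mu>)" by (simp add: sp_mu)
  also have "\<dots> = ennreal (integral\<^sup>L \<mu> (gt t))"
    by (rule nn_integral_eq_integral[OF int_gt], rule AE_I2, rule less_imp_le, rule gt_pos)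
  finally have fin: "finite_measure (nu t)" by (intro finite_measureI) simp
  show ?thesis
  proof (rule opuc_meas.intro[OF fin], unfold_locales)
    show "sets (nu t) = sets borel" by (rule sets_nu)
    show "AE z in nu t. cmod z = 1"
      unfolding nu_eq by (subst AE_density) (use AE_circle in \<open>auto elim: AE_mp\<close>)
    have "range (\<lambda>k. cis (\<theta> k)) \<subseteq> {z. measure (nu t) {z} > 0}"
      using atom_pos gt_pos by (auto simp: meas_nu_atom)
    moreover have "infinite (range (\<lambda>k. cis (\<theta> k)))"
      by (rule range_inj_infinite) (rule cis_th_inj)
    ultimately show "infinite {z. measure (nu t) {z} > 0}" using infinite_super by blast
  qed
qed

lemma nrm_nu: "opuc_meas.nrm (nu t) p = W t p / Zt t"
proof -
  have "opuc_meas.nrm (nu t) p = (\<integral>x. (cmod (poly p x))\<^sup>2 \<partial>(nu t))"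
    using opuc_meas.nrm_def[OF opuc_nu] by simp
  also have "\<dots> = (\<integral>x. gt t x *\<^sub>R (cmod (poly p x))\<^sup>2 \<partial>\<mu>)"
    unfolding nu_eq
  proof (rule integral_density)
    show "(\<lambda>x. (cmod (poly p x))\<^sup>2) \<in> borel_measurable \<mu>"
      by (rule meas_mu) (intro continuous_intros)
  qed (use gt_pos in \<open>auto intro: less_imp_le\<close>)
  also have "\<dots> = (\<integral>x. exp (2 * t * Re x) * (cmod (poly p x))\<^sup>2 / Zt t \<partial>\<mu>)"
    by (simp add: gt_def)
  also have "\<dots> = W t p / Zt t" unfolding W_def by simp
  finally show ?thesis .
qed

lemma W_min:
  assumes "degree P = n" "lead_coeff P = 1"
  shows "W t (OPUC (nu t) n) \<le> W t P"
proof -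
  have "opuc_meas.nrm (nu t) (OPUC (nu t) n) \<le> opuc_meas.nrm (nu t) P"
    by (rule opuc_meas.OPUC_min[OF opuc_nu assms])
  then have "W t (OPUC (nu t) n) / Zt t \<le> W t P / Zt t" by (simp add: nrm_nu)
  then show ?thesis using Z_pos[of t] by (simp add: divide_le_cancel)
qed

lemma W_lower:
  assumes "finite A"
  shows "(\<Sum>z\<in>A. exp (2 * t * Re z) * (cmod (poly p z))\<^sup>2 * measure \<mu> {z}) \<le> W t p"
  unfolding W_def
  by (rule atoms_le_integral[OF fin_mu sets_mu assms int_W]) simp

lemma W_upper:
  assumes "t \<ge> 0"
  shows "W t P \<le> (\<Sum>k<N. exp (2 * t * Re (cis (\<theta> k))) * (cmod (poly P (cis (\<theta> k))))\<^sup>2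
                        * measure \<mu> {cis (\<theta> k)}) + Bp P * exp (2 * t * cos (\<theta> N))"
proof -
  let ?A = "(\<lambda>k. cis (\<theta> k)) ` {..<N}"
  let ?g = "\<lambda>x. exp (2 * t * Re x) * (cmod (poly P x))\<^sup>2"
  have "W t P \<le> (\<Sum>z\<in>?A. ?g z * measure \<mu> {z}) + Bp P * exp (2 * t * cos (\<theta> N))"
    unfolding W_def
  proof (rule integral_le_atoms[OF prob sets_mu _ int_W])
    show "finite ?A" by simp
    show "AE x in \<mu>. x \<in> ?A \<or> ?g x \<le> Bp P * exp (2 * t * cos (\<theta> N))"
      using AE_top[of N]
    proof eventually_elim
      case (elim x)
      show ?case
      proof (cases "x \<in> ?A")
        case False
        then have x1: "cmod x = 1" and re: "Re x \<le> cos (\<theta> N)" using elim by auto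
        have "(cmod (poly P x))\<^sup>2 \<le> Bp P"
          unfolding Bp_def using poly_norm_bound_circle[OF x1, of P] by (simp add: power_mono)
        moreover have "t * Re x \<le> t * cos (\<theta> N)" by (rule mult_left_mono[OF re assms])
        then have "exp (2 * t * Re x) \<le> exp (2 * t * cos (\<theta> N))" by simp
        ultimately have "?g x \<le> exp (2 * t * cos (\<theta> N)) * Bp P"
          by (intro mult_mono) auto
        then show ?thesis by (simp add: mult.commute)
      qed simp
    qed
    show "Bp P * exp (2 * t * cos (\<theta> N)) \<ge> 0" unfolding Bp_def by simp
  qed simp
  also have "(\<Sum>z\<in>?A. ?g z * measure \<mu> {z}) = (\<Sum>k<N. ?g (cis (\<theta> k)) * measure \<mu> {cis (\<theta> k)})"
    by (simp add: sum.reindex[OF inj_on_subset[OF cis_th_inj subset_UNIV]] o_def)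
  finally show ?thesis .
qed

end

lemma exp_decay:
  fixes a :: real
  assumes "a < 0"
  shows "((\<lambda>t. exp (a * t)) \<longlongrightarrow> 0) at_top"
proof -
  have "filterlim (\<lambda>t. a * t) at_bot at_top"
    using filterlim_tendsto_neg_mult_at_bot[of "\<lambda>_. a" a at_top "\<lambda>t. t", OF tendsto_const assms filterlim_ident]
    by simp
  then show ?thesis by (rule filterlim_compose[OF exp_at_bot])
qed

lemma sandwich0:
  fixes f g :: "real \<Rightarrow> real"
  assumes "eventually (\<lambda>t. 0 \<le> f t \<and> f t \<le> g t) at_top" "(g \<longlongrightarrow> 0) at_top"
  shows "(f \<longlongrightarrow> 0) at_top"
proof (rule tendsto_sandwich[of "\<lambda>_. 0" f at_top g])
  show "\<forall>\<^sub>F n in at_top. 0 \<le> f n" using assms(1) by (auto elim: eventually_mono)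
  show "\<forall>\<^sub>F n in at_top. f n \<le> g n" using assms(1) by (auto elim: eventually_mono)
qed (use assms in auto)

lemma sq_to_zero:
  fixes f :: "real \<Rightarrow> complex"
  assumes "((\<lambda>t. (cmod (f t))\<^sup>2) \<longlongrightarrow> 0) at_top"
  shows "(f \<longlongrightarrow> 0) at_top"
proof -
  have "((\<lambda>t. sqrt ((cmod (f t))\<^sup>2)) \<longlongrightarrow> sqrt 0) at_top"
    by (rule tendsto_real_sqrt[OF assms])
  then have "((\<lambda>t. cmod (f t)) \<longlongrightarrow> 0) at_top" by simp
  then show ?thesis by (simp add: tendsto_norm_zero_iff)
qed

lemma linprod_deg:
  fixes f :: "nat \<Rightarrow> complex"
  assumes "finite A"
  shows "degree (\<Prod>k\<in>A. [:- f k, 1:]) = card A" "lead_coeff (\<Prod>k\<in>A. [:- f k, 1:]) = 1"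
proof -
  have "degree (\<Prod>k\<in>A. [:- f k, 1:]) = (\<Sum>k\<in>A. degree [:- f k, 1:])"
    by (rule degree_prod_eq_sum_degree) auto
  also have "\<dots> = card A" by simp
  finally show "degree (\<Prod>k\<in>A. [:- f k, 1:]) = card A" .
  show "lead_coeff (\<Prod>k\<in>A. [:- f k, 1:]) = 1" by (simp add: lead_coeff_prod)
qed

lemma monic_diff_degree:
  fixes p q :: "complex poly"
  assumes "degree p = n" "degree q = n" "lead_coeff p = 1" "lead_coeff q = 1" "0 < n"
  shows "degree (p - q) < n"
proof (rule degree_lessI)
  show "p - q \<noteq> 0 \<or> 0 < n" using assms by simp
  show "\<forall>k\<ge>n. coeff (p - q) k = 0"
  proof (intro allI impI)
    fix k assume "k \<ge> n"
    show "coeff (p - q) k = 0"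
    proof (cases "k = n")
      case True then show ?thesis using assms by simp
    next
      case False then show ?thesis using assms \<open>k \<ge> n\<close> by (simp add: coeff_eq_0)
    qed
  qed
qed

lemma lagrange_tendsto:
  fixes x :: "nat \<Rightarrow> complex" and e :: "real \<Rightarrow> complex poly"
  assumes inj: "inj_on x {..<m}" and deg: "\<And>t. degree (e t) < m"
    and lim: "\<And>k. k < m \<Longrightarrow> ((\<lambda>t. poly (e t) (x k)) \<longlongrightarrow> 0) F"
  shows "((\<lambda>t. poly (e t) y) \<longlongrightarrow> 0) F"
proof -
  have "((\<lambda>t. \<Sum>k<m. poly (e t) (x k) * (\<Prod>i\<in>{..<m}-{k}. (y - x i) / (x k - x i))) \<longlongrightarrow> 0) F"
    by (intro tendsto_null_sum tendsto_mult_left_zero lim) auto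
  then show ?thesis by (subst lagrange_interp[OF inj deg]) 
qed

context setting
begin

abbreviation "Phi t n \<equiv> OPUC (nu t) n"

lemma Phi_deg: "degree (Phi t n) = n" and Phi_lead: "lead_coeff (Phi t n) = 1"
  using opuc_meas.OPUC_props[OF opuc_nu] by auto

lemma W_lower':
  "(\<Sum>k<N. exp (2 * t * cos (\<theta> k)) * (cmod (poly p (cis (\<theta> k))))\<^sup>2 * measure \<mu> {cis (\<theta> k)}) \<le> W t p"
proof -
  have "(\<Sum>z\<in>(\<lambda>k. cis (\<theta> k)) ` {..<N}. exp (2 * t * Re z) * (cmod (poly p z))\<^sup>2 * measure \<mu> {z}) \<le> W t p"
    by (rule W_lower) simp
  then show ?thesis
    by (simp add: sum.reindex[OF inj_on_subset[OF cis_th_inj subset_UNIV]] o_def)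
qed

lemma key_ineq:
  assumes "t \<ge> 0" "degree P = n" "lead_coeff P = 1"
  shows "(\<Sum>k<N. exp (2 * t * cos (\<theta> k)) * (cmod (poly (Phi t n) (cis (\<theta> k))))\<^sup>2 * measure \<mu> {cis (\<theta> k)})
    \<le> (\<Sum>k<N. exp (2 * t * cos (\<theta> k)) * (cmod (poly P (cis (\<theta> k))))\<^sup>2 * measure \<mu> {cis (\<theta> k)})
       + Bp P * exp (2 * t * cos (\<theta> N))"
proof -
  have "(\<Sum>k<N. exp (2 * t * cos (\<theta> k)) * (cmod (poly (Phi t n) (cis (\<theta> k))))\<^sup>2 * measure \<mu> {cis (\<theta> k)})
        \<le> W t (Phi t n)" by (rule W_lower')
  also have "\<dots> \<le> W t P" by (rule W_min[OF assms(2,3)])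
  also note W_upper[OF assms(1), of P N]
  finally show ?thesis by simp
qed

lemma m_pos: "measure \<mu> {cis (\<theta> k)} > 0" by (rule atom_pos)

lemma term_le_sum:
  fixes f :: "nat \<Rightarrow> real"
  assumes "\<And>k. k < N \<Longrightarrow> f k \<ge> 0" "k < N"
  shows "f k \<le> (\<Sum>k<N. f k)"
  by (rule member_le_sum) (use assms in auto)

lemma strict_case:
  assumes lt: "\<bar>\<theta> j\<bar> < \<bar>\<theta> (Suc j)\<bar>"
  shows "((\<lambda>t. verblunsky (nu t) j) \<longlongrightarrow> - (\<Prod>k\<le>j. - cis (- \<theta> k))) at_top"
proof -
  define n where "n = Suc j"
  define P where "P = (\<Prod>k<n. [:- cis (\<theta> k), 1:])"
  have degP: "degree P = n" and leadP: "lead_coeff P = 1"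
    using linprod_deg[of "{..<n}" "\<lambda>k. cis (\<theta> k)"] by (simp_all add: P_def)
  have P0: "poly P (cis (\<theta> k)) = 0" if "k < n" for k
    unfolding P_def poly_prod using that by (intro prod_zero) auto
  have injn: "inj_on (\<lambda>k. cis (\<theta> k)) {..<n}" using inj_on_subset[OF cis_th_inj subset_UNIV] .
  have node_lim: "((\<lambda>t. poly (Phi t n) (cis (\<theta> k))) \<longlongrightarrow> 0) at_top" if k: "k < n" for k
  proof -
    define mk where "mk = measure \<mu> {cis (\<theta> k)}"
    have mk: "mk > 0" unfolding mk_def by (rule m_pos)
    define a where "a = 2 * (cos (\<theta> n) - cos (\<theta> k))"
    have "\<bar>\<theta> k\<bar> < \<bar>\<theta> n\<bar>" using abs_mono[of k j] k lt by (simp add: n_def)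
    then have "a < 0" unfolding a_def using cos_strict by simp
    have ev: "eventually (\<lambda>t. 0 \<le> (cmod (poly (Phi t n) (cis (\<theta> k))))\<^sup>2 \<and>
                (cmod (poly (Phi t n) (cis (\<theta> k))))\<^sup>2 \<le> Bp P / mk * exp (a * t)) at_top"
      using eventually_ge_at_top[of "0::real"]
    proof eventually_elim
      case (elim t)
      let ?f = "\<lambda>k. exp (2 * t * cos (\<theta> k)) * (cmod (poly (Phi t n) (cis (\<theta> k))))\<^sup>2 * measure \<mu> {cis (\<theta> k)}"
      have "?f k \<le> (\<Sum>k<n. ?f k)"
        by (rule term_le_sum) (use k in \<open>auto intro!: mult_nonneg_nonneg\<close>)
      also have "\<dots> \<le> (\<Sum>k<n. exp (2 * t * cos (\<theta> k)) * (cmod (poly P (cis (\<theta> k))))\<^sup>2 * measure \<mu> {cis (\<theta> k)})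
                      + Bp P * exp (2 * t * cos (\<theta> n))"
        by (rule key_ineq[OF elim degP leadP])
      also have "(\<Sum>k<n. exp (2 * t * cos (\<theta> k)) * (cmod (poly P (cis (\<theta> k))))\<^sup>2 * measure \<mu> {cis (\<theta> k)}) = 0"
        using P0 by simp
      finally have "exp (2 * t * cos (\<theta> k)) * (cmod (poly (Phi t n) (cis (\<theta> k))))\<^sup>2 * mk
                     \<le> Bp P * exp (2 * t * cos (\<theta> n))" by (simp add: mk_def)
      then have "(cmod (poly (Phi t n) (cis (\<theta> k))))\<^sup>2
                   \<le> Bp P * exp (2 * t * cos (\<theta> n)) / (exp (2 * t * cos (\<theta> k)) * mk)"
        using mk by (simp add: field_simps)
      also have "\<dots> = Bp P / mk * (exp (2 * t * cos (\<theta> n)) / exp (2 * t * cos (\<theta> k)))"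
        by simp
      also have "exp (2 * t * cos (\<theta> n)) / exp (2 * t * cos (\<theta> k)) = exp (a * t)"
        by (simp add: a_def exp_diff[symmetric] algebra_simps)
      finally show ?case by simp
    qed
    have "((\<lambda>t. Bp P / mk * exp (a * t)) \<longlongrightarrow> Bp P / mk * 0) at_top"
      by (intro tendsto_mult tendsto_const exp_decay \<open>a < 0\<close>)
    then have "((\<lambda>t. (cmod (poly (Phi t n) (cis (\<theta> k))))\<^sup>2) \<longlongrightarrow> 0) at_top"
      using sandwich0[OF ev] by simp
    then show ?thesis by (rule sq_to_zero)
  qed
  have e_lim: "((\<lambda>t. poly (Phi t n - P) 0) \<longlongrightarrow> 0) at_top"
  proof (rule lagrange_tendsto[OF injn])
    show "degree (Phi t n - P) < n" for t
      by (rule monic_diff_degree[OF Phi_deg degP Phi_lead leadP]) (simp add: n_def)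
    fix k assume "k < n"
    then show "((\<lambda>t. poly (Phi t n - P) (cis (\<theta> k))) \<longlongrightarrow> 0) at_top"
      using node_lim[of k] P0[of k] by simp
  qed
  then have "((\<lambda>t. poly (Phi t n - P) 0 + poly P 0) \<longlongrightarrow> 0 + poly P 0) at_top"
    by (intro tendsto_add tendsto_const)
  then have "((\<lambda>t. poly (Phi t n) 0) \<longlongrightarrow> poly P 0) at_top" by simp
  then have "((\<lambda>t. - cnj (poly (Phi t n) 0)) \<longlongrightarrow> - cnj (poly P 0)) at_top"
    by (intro tendsto_minus tendsto_cnj)
  moreover have "- cnj (poly P 0) = - (\<Prod>k\<le>j. - cis (- \<theta> k))"
    unfolding P_def poly_prod n_def by (simp add: lessThan_Suc_atMost cis_cnj)
  ultimately show ?thesis unfolding verblunsky_def n_def by simp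
qed

end

lemma G_ident_real:
  fixes p q ax bx cx yx :: real
  assumes "(p + q) * cx = p * ax + q * bx"
  shows "p * (ax - yx)\<^sup>2 + q * (bx - yx)\<^sup>2 = p * (ax - cx)\<^sup>2 + q * (bx - cx)\<^sup>2 + (p + q) * (yx - cx)\<^sup>2"
proof -
  have "p * (ax - yx)\<^sup>2 + q * (bx - yx)\<^sup>2 - (p * (ax - cx)\<^sup>2 + q * (bx - cx)\<^sup>2 + (p + q) * (yx - cx)\<^sup>2)
        = (cx - yx) * 2 * ((p * ax + q * bx) - (p + q) * cx)"
    by (simp add: power2_eq_square algebra_simps)
  also have "\<dots> = 0" using assms by simp
  finally show ?thesis by simp
qed

lemma G_ident:
  fixes a b y :: complex and p q :: real
  assumes "p + q > 0"
  defines "c \<equiv> (of_real p * a + of_real q * b) / of_real (p + q)"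
  shows "p * (cmod (a - y))\<^sup>2 + q * (cmod (b - y))\<^sup>2
       = p * (cmod (a - c))\<^sup>2 + q * (cmod (b - c))\<^sup>2 + (p + q) * (cmod (y - c))\<^sup>2"
proof -
  have cc: "of_real (p + q) * c = of_real p * a + of_real q * b"
  proof -
    have nz: "complex_of_real (p + q) \<noteq> 0" using assms(1) by (simp del: of_real_add)
    show ?thesis unfolding c_def using nz by (simp del: of_real_add)
  qed
  have re: "(p + q) * Re c = p * Re a + q * Re b"
    using arg_cong[OF cc, of Re] by simp
  have im: "(p + q) * Im c = p * Im a + q * Im b"
    using arg_cong[OF cc, of Im] by simp
  show ?thesis
    unfolding cmod_power2 using G_ident_real[OF re, of "Re y"] G_ident_real[OF im, of "Im y"]
    by (simp add: algebra_simps)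
qed

lemma sq_cross:
  fixes w d :: complex
  shows "(cmod w)\<^sup>2 \<le> (cmod (w + d))\<^sup>2 + 2 * cmod w * cmod d"
proof -
  have "cmod w \<le> cmod (w + d) + cmod d" using norm_triangle_ineq4[of "w + d" d] by simp
  then have "cmod w * cmod w \<le> cmod w * (cmod (w + d) + cmod d)"
    by (intro mult_left_mono) auto
  moreover have "2 * (cmod w * cmod (w + d)) \<le> (cmod w)\<^sup>2 + (cmod (w + d))\<^sup>2"
    using sum_squares_bound[of "cmod w" "cmod (w + d)"] by (simp add: algebra_simps)
  ultimately show ?thesis by (simp add: power2_eq_square algebra_simps)
qed


context setting
begin

lemma tie_case:
  assumes eq: "\<bar>\<theta> j\<bar> = \<bar>\<theta> (Suc j)\<bar>"
  shows "let bp = (\<Prod>k<j. (cmod (cis (\<theta> j) - cis (\<theta> k)))\<^sup>2) * measure \<mu> {cis (\<theta> j)};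
                bm = (\<Prod>k<j. (cmod (cis (- \<theta> j) - cis (\<theta> k)))\<^sup>2) * measure \<mu> {cis (- \<theta> j)};
                a = bp / (bp + bm)
            in ((\<lambda>t. verblunsky (exp_tilt \<mu> t) j) \<longlongrightarrow>
                  (\<Prod>k<j. - cis (- \<theta> k)) * (complex_of_real a * cis (- \<theta> j)
                     + complex_of_real (1 - a) * cis (\<theta> j))) at_top"
proof -
  have "\<theta> (Suc j) \<noteq> \<theta> j" using th_inj by (auto dest: injD)
  then have neg: "\<theta> (Suc j) = - \<theta> j" using eq by (auto simp: abs_if split: if_splits)
  define zp where "zp = cis (\<theta> j)"
  define zm where "zm = cis (- \<theta> j)"
  have zm': "cis (\<theta> (Suc j)) = zm" by (simp add: neg zm_def)
  define mp where "mp = measure \<mu> {zp}"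
  define mm where "mm = measure \<mu> {zm}"
  have mp: "mp > 0" unfolding mp_def zp_def by (rule m_pos)
  have mm: "mm > 0" unfolding mm_def using m_pos[of "Suc j"] zm' by simp
  have before: "\<bar>\<theta> k\<bar> < \<bar>\<theta> j\<bar>" if "k < j" for k
  proof -
    have "\<bar>\<theta> k\<bar> < \<bar>\<theta> (Suc (Suc k))\<bar>" by (rule step2)
    also have "\<dots> \<le> \<bar>\<theta> (Suc j)\<bar>" using that by (intro abs_mono) simp
    finally show ?thesis using eq by simp
  qed
  define q where "q = (\<Prod>k<j. [:- cis (\<theta> k), 1:])"
  have polyq: "poly q y = (\<Prod>k<j. y - cis (\<theta> k))" for y
    unfolding q_def poly_prod by simp
  have degq: "degree q = j" and leadq: "lead_coeff q = 1"
    using linprod_deg[of "{..<j}" "\<lambda>k. cis (\<theta> k)"] by (simp_all add: q_def)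
  have q0: "q \<noteq> 0" using leadq by auto
  have q_node: "poly q (cis (\<theta> k)) = 0" if "k < j" for k
    unfolding polyq using that by (intro prod_zero) auto
  have cis_ne: "cis (\<theta> l) \<noteq> cis (\<theta> k)" if "k \<noteq> l" for k l
    using cis_th_inj that by (auto dest: injD)
  define qp where "qp = poly q zp"
  define qm where "qm = poly q zm"
  have qp: "qp \<noteq> 0" unfolding qp_def polyq zp_def using cis_ne by (auto simp: prod_zero_iff)
  have qm: "qm \<noteq> 0" unfolding qm_def polyq zm'[symmetric] using cis_ne by (auto simp: prod_zero_iff)
  define bp where "bp = (cmod qp)\<^sup>2 * mp"
  define bm where "bm = (cmod qm)\<^sup>2 * mm"
  have bp: "bp > 0" unfolding bp_def using qp mp by simp
  have bm: "bm > 0" unfolding bm_def using qm mm by simp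
  define c where "c = (of_real bp * zp + of_real bm * zm) / of_real (bp + bm)"
  define P where "P = q * [:- c, 1:]"
  have polyP: "poly P y = poly q y * (y - c)" for y unfolding P_def by (simp add: algebra_simps)
  have degP: "degree P = Suc j" unfolding P_def using q0 by (subst degree_mult_eq) (auto simp: degq)
  have lc1: "lead_coeff [:- c, 1:] = 1" by simp
  have leadP: "lead_coeff P = 1" by (simp only: P_def lead_coeff_mult leadq lc1 mult_1)
  define s where "s = cos (\<theta> j)"
  have cosSj: "cos (\<theta> (Suc j)) = s" by (simp add: neg s_def)
  define r where "r = cos (\<theta> (Suc (Suc j)))"
  have rs: "r < s" unfolding r_def s_def by (rule cos_strict[OF step2[of j]])
  have cos_before: "s < cos (\<theta> k)" if "k < j" for k
    unfolding s_def by (rule cos_strict[OF before[OF that]])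
  define K where "K = mp * (cmod (poly P zp))\<^sup>2 + mm * (cmod (poly P zm))\<^sup>2"
  define Bq where "Bq = Bp P"
  have Bq: "Bq \<ge> 0" unfolding Bq_def Bp_def by simp
  have K: "K \<ge> 0" unfolding K_def using mp mm by simp
  define u where "u t = poly (Phi t (Suc j)) zp" for t
  define v where "v t = poly (Phi t (Suc j)) zm" for t
  define f where "f t k = exp (2 * t * cos (\<theta> k)) * (cmod (poly (Phi t (Suc j)) (cis (\<theta> k))))\<^sup>2
                          * measure \<mu> {cis (\<theta> k)}" for t k
  have f_nonneg: "f t k \<ge> 0" for t k unfolding f_def by simp
  have main: "(\<Sum>k<j. f t k) + exp (2 * t * s) * (mp * (cmod (u t))\<^sup>2 + mm * (cmod (v t))\<^sup>2)
               \<le> exp (2 * t * s) * K + Bq * exp (2 * t * r)" if t: "t \<ge> 0" for t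
  proof -
    have ki: "(\<Sum>k<Suc (Suc j). f t k)
      \<le> (\<Sum>k<Suc (Suc j). exp (2 * t * cos (\<theta> k)) * (cmod (poly P (cis (\<theta> k))))\<^sup>2 * measure \<mu> {cis (\<theta> k)})
         + Bp P * exp (2 * t * cos (\<theta> (Suc (Suc j))))"
      unfolding f_def by (rule key_ineq[OF t degP leadP])
    have "(\<Sum>k<j. exp (2 * t * cos (\<theta> k)) * (cmod (poly P (cis (\<theta> k))))\<^sup>2 * measure \<mu> {cis (\<theta> k)}) = 0"
      using q_node by (simp add: polyP)
    then have e1: "(\<Sum>k<Suc (Suc j). exp (2 * t * cos (\<theta> k)) * (cmod (poly P (cis (\<theta> k))))\<^sup>2 * measure \<mu> {cis (\<theta> k)})
       = exp (2 * t * s) * K"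
      by (simp add: zm' cosSj K_def mp_def mm_def zp_def s_def algebra_simps)
    have e2: "(\<Sum>k<Suc (Suc j). f t k) = (\<Sum>k<j. f t k) + exp (2 * t * s) * (mp * (cmod (u t))\<^sup>2 + mm * (cmod (v t))\<^sup>2)"
      by (simp add: f_def u_def v_def zm' cosSj mp_def mm_def zp_def s_def algebra_simps)
    show ?thesis using ki e1 e2 by (simp add: Bq_def r_def)
  qed
  have Fbound: "mp * (cmod (u t))\<^sup>2 + mm * (cmod (v t))\<^sup>2 \<le> K + Bq * exp (2 * (r - s) * t)"
    if t: "t \<ge> 0" for t
  proof -
    have "(\<Sum>k<j. f t k) \<ge> 0" by (rule sum_nonneg) (rule f_nonneg)
    then have "exp (2 * t * s) * (mp * (cmod (u t))\<^sup>2 + mm * (cmod (v t))\<^sup>2)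
               \<le> exp (2 * t * s) * K + Bq * exp (2 * t * r)" using main[OF t] by linarith
    then have "mp * (cmod (u t))\<^sup>2 + mm * (cmod (v t))\<^sup>2 \<le> (exp (2 * t * s) * K + Bq * exp (2 * t * r)) / exp (2 * t * s)"
      by (simp add: pos_le_divide_eq mult.commute)
    also have "\<dots> = K + Bq * (exp (2 * t * r) / exp (2 * t * s))" by (simp add: field_simps)
    also have "exp (2 * t * r) / exp (2 * t * s) = exp (2 * (r - s) * t)"
      by (simp add: exp_diff[symmetric] algebra_simps)
    finally show ?thesis .
  qed
  have node_lim: "((\<lambda>t. poly (Phi t (Suc j)) (cis (\<theta> k))) \<longlongrightarrow> 0) at_top" if k: "k < j" for k
  proof -
    define mk where "mk = measure \<mu> {cis (\<theta> k)}"
    have mk: "mk > 0" unfolding mk_def by (rule m_pos)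
    define ck where "ck = cos (\<theta> k)"
    define a1 where "a1 = 2 * (s - ck)"
    define a2 where "a2 = 2 * (r - ck)"
    have a1: "a1 < 0" and a2: "a2 < 0" using cos_before[OF k] rs by (simp_all add: a1_def a2_def ck_def)
    have ev: "eventually (\<lambda>t. 0 \<le> (cmod (poly (Phi t (Suc j)) (cis (\<theta> k))))\<^sup>2 \<and>
                (cmod (poly (Phi t (Suc j)) (cis (\<theta> k))))\<^sup>2 \<le> K / mk * exp (a1 * t) + Bq / mk * exp (a2 * t)) at_top"
      using eventually_ge_at_top[of "0::real"]
    proof eventually_elim
      case (elim t)
      have "f t k \<le> (\<Sum>k<j. f t k)" by (rule term_le_sum) (use k f_nonneg in auto)
      also have "\<dots> \<le> exp (2 * t * s) * K + Bq * exp (2 * t * r)"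
        using main[OF elim] mp mm by (smt (verit) mult_nonneg_nonneg zero_le_power2 exp_gt_zero)
      finally have "(cmod (poly (Phi t (Suc j)) (cis (\<theta> k))))\<^sup>2 * (exp (2 * t * ck) * mk)
                      \<le> exp (2 * t * s) * K + Bq * exp (2 * t * r)"
        by (simp add: f_def mk_def ck_def algebra_simps)
      then have "(cmod (poly (Phi t (Suc j)) (cis (\<theta> k))))\<^sup>2
                   \<le> (exp (2 * t * s) * K + Bq * exp (2 * t * r)) / (exp (2 * t * ck) * mk)"
        using mk by (simp add: pos_le_divide_eq)
      also have "\<dots> = K / mk * (exp (2 * t * s) / exp (2 * t * ck)) + Bq / mk * (exp (2 * t * r) / exp (2 * t * ck))"
        using mk by (simp add: field_simps)
      also have "exp (2 * t * s) / exp (2 * t * ck) = exp (a1 * t)"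
        by (simp add: a1_def exp_diff[symmetric] algebra_simps)
      also have "exp (2 * t * r) / exp (2 * t * ck) = exp (a2 * t)"
        by (simp add: a2_def exp_diff[symmetric] algebra_simps)
      finally show ?case by simp
    qed
    have "((\<lambda>t. K / mk * exp (a1 * t) + Bq / mk * exp (a2 * t)) \<longlongrightarrow> K / mk * 0 + Bq / mk * 0) at_top"
      by (intro tendsto_add tendsto_mult tendsto_const exp_decay a1 a2)
    then have "((\<lambda>t. (cmod (poly (Phi t (Suc j)) (cis (\<theta> k))))\<^sup>2) \<longlongrightarrow> 0) at_top"
      using sandwich0[OF ev] by simp
    then show ?thesis by (rule sq_to_zero)
  qed
  define R where "R = (\<Prod>k<Suc j. [:- cis (\<theta> k), 1:])"
  have degR: "degree R = Suc j" and leadR: "lead_coeff R = 1"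
    using linprod_deg[of "{..<Suc j}" "\<lambda>k. cis (\<theta> k)"] by (simp_all add: R_def)
  have polyR: "poly R y = poly q y * (y - zp)" for y
    unfolding R_def poly_prod polyq zp_def by simp
  have R_node: "poly R (cis (\<theta> k)) = 0" if "k < Suc j" for k
    unfolding R_def poly_prod using that by (intro prod_zero) auto
  have injS: "inj_on (\<lambda>k. cis (\<theta> k)) {..<Suc j}" using inj_on_subset[OF cis_th_inj subset_UNIV] .
  define l where "l k y = (\<Prod>i\<in>{..<Suc j}-{k}. (y - cis (\<theta> i)) / (cis (\<theta> k) - cis (\<theta> i)))" for k y
  have lj: "l j y = poly q y / qp" for y
  proof -
    have "{..<Suc j} - {j} = {..<j}" by auto
    then show ?thesis unfolding l_def qp_def polyq zp_def by (simp add: prod_dividef)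
  qed
  define ct where "ct t = zp - u t / qp" for t
  define D where "D t y = poly (Phi t (Suc j)) y - poly q y * (y - ct t)" for t y
  have D_eq: "D t y = (\<Sum>k<j. poly (Phi t (Suc j)) (cis (\<theta> k)) * l k y)" for t y
  proof -
    have dg: "degree (Phi t (Suc j) - R) < Suc j"
      by (rule monic_diff_degree[OF Phi_deg degR Phi_lead leadR]) simp
    have "poly (Phi t (Suc j) - R) y = (\<Sum>k<Suc j. poly (Phi t (Suc j) - R) (cis (\<theta> k)) * l k y)"
      unfolding l_def by (rule lagrange_interp[OF injS dg])
    also have "\<dots> = (\<Sum>k<j. poly (Phi t (Suc j)) (cis (\<theta> k)) * l k y) + u t * (poly q y / qp)"
      using R_node by (simp add: lj u_def zp_def)
    finally have "poly (Phi t (Suc j)) y - poly R y = (\<Sum>k<j. poly (Phi t (Suc j)) (cis (\<theta> k)) * l k y) + u t * (poly q y / qp)"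
      by simp
    then show ?thesis unfolding D_def ct_def polyR using qp by (simp add: field_simps)
  qed
  have D_lim: "((\<lambda>t. D t y) \<longlongrightarrow> 0) at_top" for y
    unfolding D_eq by (intro tendsto_null_sum tendsto_mult_left_zero node_lim) auto
  have u_eq: "u t = qp * (zp - ct t)" for t unfolding ct_def using qp by (simp add: field_simps)
  define w where "w t = qm * (zm - ct t)" for t
  have v_eq: "v t = w t + D t zm" for t unfolding w_def D_def v_def qm_def by simp
  define U where "U = sqrt ((K + Bq) / mp)"
  define Dw where "Dw = cmod qm * (2 + U / cmod qp)"
  have U: "U \<ge> 0" unfolding U_def using K Bq mp by simp
  have Dw: "Dw \<ge> 0" unfolding Dw_def using U by simp
  have Gc: "bp * (cmod (zp - c))\<^sup>2 + bm * (cmod (zm - c))\<^sup>2 = K"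
    unfolding K_def polyP bp_def bm_def qp_def[symmetric] qm_def[symmetric] norm_mult power_mult_distrib
    by (simp add: algebra_simps)
  have Gct: "bp * (cmod (zp - ct t))\<^sup>2 + bm * (cmod (zm - ct t))\<^sup>2 = mp * (cmod (u t))\<^sup>2 + mm * (cmod (w t))\<^sup>2" for t
    unfolding u_eq w_def bp_def bm_def norm_mult power_mult_distrib by (simp add: algebra_simps)
  have cbound: "(bp + bm) * (cmod (ct t - c))\<^sup>2 \<le> Bq * exp (2 * (r - s) * t) + 2 * mm * Dw * cmod (D t zm)"
    if t: "t \<ge> 0" for t
  proof -
    have ex1: "exp (2 * (r - s) * t) \<le> 1" using rs t by (simp add: mult_nonpos_nonneg)
    have Fb: "mp * (cmod (u t))\<^sup>2 + mm * (cmod (v t))\<^sup>2 \<le> K + Bq * exp (2 * (r - s) * t)"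
      by (rule Fbound[OF t])
    have "mp * (cmod (u t))\<^sup>2 \<le> K + Bq"
      using Fb ex1 Bq mm by (smt (verit) mult_left_le mult_nonneg_nonneg zero_le_power2)
    then have "(cmod (u t))\<^sup>2 \<le> (K + Bq) / mp" using mp by (simp add: pos_le_divide_eq mult.commute)
    then have uU: "cmod (u t) \<le> U" unfolding U_def by (rule real_le_rsqrt)
    have "cmod (ct t) \<le> cmod zp + cmod (u t / qp)" unfolding ct_def by (rule norm_triangle_ineq4)
    also have "\<dots> \<le> 1 + U / cmod qp" using uU qp by (simp add: zp_def norm_divide divide_right_mono)
    finally have ctb: "cmod (ct t) \<le> 1 + U / cmod qp" .
    have "cmod (zm - ct t) \<le> cmod zm + cmod (ct t)" by (rule norm_triangle_ineq4)
    also have "\<dots> \<le> 2 + U / cmod qp" using ctb by (simp add: zm_def)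
    finally have "cmod (w t) \<le> Dw" unfolding w_def Dw_def norm_mult by (intro mult_left_mono) auto
    have "(cmod (w t))\<^sup>2 \<le> (cmod (v t))\<^sup>2 + 2 * cmod (w t) * cmod (D t zm)"
      unfolding v_eq by (rule sq_cross)
    also have "\<dots> \<le> (cmod (v t))\<^sup>2 + 2 * Dw * cmod (D t zm)"
      using \<open>cmod (w t) \<le> Dw\<close> by (simp add: mult_right_mono)
    finally have wv: "(cmod (w t))\<^sup>2 \<le> (cmod (v t))\<^sup>2 + 2 * Dw * cmod (D t zm)" .
    have "bp * (cmod (zp - ct t))\<^sup>2 + bm * (cmod (zm - ct t))\<^sup>2
          = bp * (cmod (zp - c))\<^sup>2 + bm * (cmod (zm - c))\<^sup>2 + (bp + bm) * (cmod (ct t - c))\<^sup>2"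
      unfolding c_def by (rule G_ident) (use bp bm in simp)
    then have "K + (bp + bm) * (cmod (ct t - c))\<^sup>2 = mp * (cmod (u t))\<^sup>2 + mm * (cmod (w t))\<^sup>2"
      using Gc Gct[of t] by simp
    also have "\<dots> \<le> mp * (cmod (u t))\<^sup>2 + mm * ((cmod (v t))\<^sup>2 + 2 * Dw * cmod (D t zm))"
      using wv mm by (simp add: mult_left_mono)
    also have "\<dots> = (mp * (cmod (u t))\<^sup>2 + mm * (cmod (v t))\<^sup>2) + 2 * mm * Dw * cmod (D t zm)"
      by (simp add: algebra_simps)
    finally show ?thesis using Fb by linarith
  qed
  have ct_lim: "(ct \<longlongrightarrow> c) at_top"
  proof -
    have ev: "eventually (\<lambda>t. 0 \<le> (cmod (ct t - c))\<^sup>2 \<and> (cmod (ct t - c))\<^sup>2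
                 \<le> (Bq * exp (2 * (r - s) * t) + 2 * mm * Dw * cmod (D t zm)) / (bp + bm)) at_top"
      using eventually_ge_at_top[of "0::real"]
    proof eventually_elim
      case (elim t)
      show ?case using cbound[OF elim] bp bm by (simp add: pos_le_divide_eq mult.commute)
    qed
    have "((\<lambda>t. (Bq * exp (2 * (r - s) * t) + 2 * mm * Dw * cmod (D t zm)) / (bp + bm))
            \<longlongrightarrow> (Bq * 0 + 2 * mm * Dw * 0) / (bp + bm)) at_top"
      using rs bp bm by (intro tendsto_divide tendsto_add tendsto_mult tendsto_const exp_decay
          tendsto_norm_zero D_lim) auto
    then have "((\<lambda>t. (cmod (ct t - c))\<^sup>2) \<longlongrightarrow> 0) at_top"
      using sandwich0[OF ev] by simp
    then have "((\<lambda>t. ct t - c) \<longlongrightarrow> 0) at_top" by (rule sq_to_zero)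
    then show ?thesis by (rule LIM_zero_cancel)
  qed
  have "((\<lambda>t. poly q 0 * (0 - ct t) + D t 0) \<longlongrightarrow> poly q 0 * (0 - c) + 0) at_top"
    by (intro tendsto_add tendsto_mult tendsto_const tendsto_diff ct_lim D_lim)
  then have "((\<lambda>t. poly (Phi t (Suc j)) 0) \<longlongrightarrow> - (poly q 0 * c)) at_top"
    by (simp add: D_def)
  then have lim: "((\<lambda>t. verblunsky (nu t) j) \<longlongrightarrow> cnj (poly q 0) * cnj c) at_top"
    unfolding verblunsky_def by (intro tendsto_eq_intros) auto
  have bp_eq: "(\<Prod>k<j. (cmod (cis (\<theta> j) - cis (\<theta> k)))\<^sup>2) * measure \<mu> {cis (\<theta> j)} = bp"
    unfolding bp_def qp_def polyq mp_def zp_def by (simp add: prod_norm[symmetric] prod_power_distrib)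
  have bm_eq: "(\<Prod>k<j. (cmod (cis (- \<theta> j) - cis (\<theta> k)))\<^sup>2) * measure \<mu> {cis (- \<theta> j)} = bm"
    unfolding bm_def qm_def polyq mm_def zm_def by (simp add: prod_norm[symmetric] prod_power_distrib)
  have q0eq: "cnj (poly q 0) = (\<Prod>k<j. - cis (- \<theta> k))"
    unfolding polyq by (simp add: cis_cnj)
  have nz: "complex_of_real (bp + bm) \<noteq> 0" using bp bm by (simp del: of_real_add)
  have ceq: "cnj c = complex_of_real (bp / (bp + bm)) * cis (- \<theta> j)
                     + complex_of_real (1 - bp / (bp + bm)) * cis (\<theta> j)"
  proof -
    have "1 - bp / (bp + bm) = bm / (bp + bm)" using bp bm by (simp add: field_simps)
    then show ?thesis unfolding c_def zp_def zm_def using nz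
      by (simp add: cis_cnj add_divide_distrib del: of_real_add)
  qed
  show ?thesis unfolding Let_def bp_eq bm_eq using lim by (simp add: q0eq ceq)
qed

end

theorem theorem7p1:
  fixes \<mu> :: "complex measure" and \<theta> :: "nat \<Rightarrow> real" and j :: nat
  assumes "prob_space \<mu>" and "sets \<mu> = sets borel"
    and "emeasure \<mu> (sphere 0 1) = 1"
    and "infinite (supp_meas \<mu>)"
    and "infinite {\<phi>. -pi < \<phi> \<and> \<phi> \<le> pi \<and> \<bar>\<phi>\<bar> < Theta \<mu> \<and> cis \<phi> \<in> supp_meas \<mu>}"
    and "bij_betw \<theta> UNIV {\<phi>. -pi < \<phi> \<and> \<phi> \<le> pi \<and> \<bar>\<phi>\<bar> < Theta \<mu> \<and> cis \<phi> \<in> supp_meas \<mu>}"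
    and "mono (\<lambda>k. \<bar>\<theta> k\<bar>)"
  shows "((j = 0 \<or> \<bar>\<theta> (j - 1)\<bar> < \<bar>\<theta> j\<bar>) \<and> \<bar>\<theta> j\<bar> < \<bar>\<theta> (Suc j)\<bar> \<longrightarrow>
           ((\<lambda>t. verblunsky (exp_tilt \<mu> t) j) \<longlongrightarrow> - (\<Prod>k\<le>j. - cis (- \<theta> k))) at_top)
       \<and> (\<bar>\<theta> j\<bar> = \<bar>\<theta> (Suc j)\<bar> \<longrightarrow>
           (let bp = (\<Prod>k<j. (cmod (cis (\<theta> j) - cis (\<theta> k)))\<^sup>2) * measure \<mu> {cis (\<theta> j)};
                bm = (\<Prod>k<j. (cmod (cis (- \<theta> j) - cis (\<theta> k)))\<^sup>2) * measure \<mu> {cis (- \<theta> j)};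
                a = bp / (bp + bm)
            in ((\<lambda>t. verblunsky (exp_tilt \<mu> t) j) \<longlongrightarrow>
                  (\<Prod>k<j. - cis (- \<theta> k)) * (complex_of_real a * cis (- \<theta> j)
                     + complex_of_real (1 - a) * cis (\<theta> j))) at_top))"
proof -
  interpret St: setting \<mu> \<theta> by (rule setting.intro[OF assms(1,2,3,6,7)])
  show ?thesis
  proof (intro conjI impI)
    assume "(j = 0 \<or> \<bar>\<theta> (j - 1)\<bar> < \<bar>\<theta> j\<bar>) \<and> \<bar>\<theta> j\<bar> < \<bar>\<theta> (Suc j)\<bar>"
    then have "\<bar>\<theta> j\<bar> < \<bar>\<theta> (Suc j)\<bar>" by simp
    then show "((\<lambda>t. verblunsky (exp_tilt \<mu> t) j) \<longlongrightarrow> - (\<Prod>k\<le>j. - cis (- \<theta> k))) at_top"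
      by (rule St.strict_case)
  next
    assume "\<bar>\<theta> j\<bar> = \<bar>\<theta> (Suc j)\<bar>"
    then show "let bp = (\<Prod>k<j. (cmod (cis (\<theta> j) - cis (\<theta> k)))\<^sup>2) * measure \<mu> {cis (\<theta> j)};
                bm = (\<Prod>k<j. (cmod (cis (- \<theta> j) - cis (\<theta> k)))\<^sup>2) * measure \<mu> {cis (- \<theta> j)};
                a = bp / (bp + bm)
            in ((\<lambda>t. verblunsky (exp_tilt \<mu> t) j) \<longlongrightarrow>
                  (\<Prod>k<j. - cis (- \<theta> k)) * (complex_of_real a * cis (- \<theta> j)
                     + complex_of_real (1 - a) * cis (\<theta> j))) at_top"
      by (rule St.tie_case)
  qed
qed

end
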